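(* For every $\rho\in\mathfrak M_d$, $\sup_{\theta\in\Delta_d}R^{\mathrm{iid}}_\theta(\bar\rho)\le\sup_{\theta\in\Delta_d}R^{\mathrm{iid}}_\theta(\rho)$, and $$\sup_{\theta\in\Delta_d}R^{\mathrm{iid}}_\theta(\bar\rho)=\frac{(d-1)^2}{n\operatorname{tr}\Sigma(\rho)},$$ interpreted as $+\infty$ when $\operatorname{tr}\Sigma(\rho)=0$.
   Context: Fix $d\ge2$, $n\ge1$. Let $H\in\mathbb R^{d\times(d-1)}$ have orthonormal columns spanning $\{u\in\mathbb R^d:\mathbf 1^\top u=0\}$, $\gamma_i:=H^\top e_i$, $\mathcal X_d:=\{x\in\mathbb R^{d-1}:1+\gamma_i^\top x\ge0\ \forall i\}$, $\Delta_d$ the probability simplex, $h_\theta:=\sum_i\theta_i\gamma_i$. An anchored law is a Borel probability measure $\rho$ on $\mathcal X_d$ with $\int x\,\rho(dx)=0$; $\mathfrak M_d$ is the set of anchored laws; $\Sigma(\rho):=\int xx^\top\rho(dx)$. I.i.d. risk: $X_1,\dots,X_n$ i.i.d. with law $(1+h_\theta^\top x)\rho(dx)$, $\widehat\theta_\rho:=\mathbf 1/d+H\Sigma(\rho)^{-1}\frac1n\sum_mX_m$, $R^{\mathrm{iid}}_\theta(\rho):=\mathbb E\|\widehat\theta_\rho-\theta\|_2^2$, with $R^{\mathrm{iid}}_\theta(\rho):=+\infty$ whenever $\Sigma(\rho)$ is singular. Symmetrization: for a permutation $\pi$ with matrix $\Pi$, $P_\pi:=H^\top\Pi H$, and $\bar\rho:=\frac1{d!}\sum_\pi(P_\pi)_\#\rho$.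 *)

theory Defs
  imports "HOL-Probability.Probability"
begin

text \<open>Dimensions: the ambient space R^d is real^'d (d = CARD('d)), the chart space
R^(d-1) is real^'k.  H is a d x (d-1) matrix, i.e. of type real^'k^'d.\<close>

definition ones :: "real^'d" where
  "ones = (\<chi> i. 1)"

definition gam :: "real^'k^'d \<Rightarrow> 'd \<Rightarrow> real^'k" where
  "gam H i = transpose H *v axis i 1"

definition Xd :: "real^'k^'d \<Rightarrow> (real^'k) set" where
  "Xd H = {x. \<forall>i. 1 + gam H i \<bullet> x \<ge> 0}"

definition prob_simplex :: "(real^'d) set" where
  "prob_simplex = {\<theta>. (\<forall>i. \<theta> $ i \<ge> 0) \<and> (\<Sum>i\<in>UNIV. \<theta> $ i) = 1}"

definition hvec :: "real^'k^'d \<Rightarrow> real^'d \<Rightarrow> real^'k" where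
  "hvec H \<theta> = (\<Sum>i\<in>UNIV. \<theta> $ i *\<^sub>R gam H i)"

definition anchored :: "real^'k^'d \<Rightarrow> (real^'k) measure \<Rightarrow> bool" where
  "anchored H \<rho> \<longleftrightarrow> prob_space \<rho> \<and> sets \<rho> = sets borel \<and>
     (AE x in \<rho>. x \<in> Xd H) \<and> (\<integral>x. x \<partial>\<rho>) = 0"

definition Sig :: "(real^'k) measure \<Rightarrow> real^'k^'k" where
  "Sig \<rho> = (\<chi> i j. \<integral>x. x $ i * x $ j \<partial>\<rho>)"

definition obs_law :: "real^'k^'d \<Rightarrow> real^'d \<Rightarrow> (real^'k) measure \<Rightarrow> (real^'k) measure" where
  "obs_law H \<theta> \<rho> = density \<rho> (\<lambda>x. ennreal (1 + hvec H \<theta> \<bullet> x))"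

definition theta_hat :: "nat \<Rightarrow> real^'k^'d \<Rightarrow> (real^'k) measure \<Rightarrow> (nat \<Rightarrow> real^'k) \<Rightarrow> real^'d" where
  "theta_hat n H \<rho> X = (1 / real CARD('d)) *\<^sub>R ones
      + H *v (matrix_inv (Sig \<rho>) *v ((1 / real n) *\<^sub>R (\<Sum>m<n. X m)))"

definition R_iid :: "nat \<Rightarrow> real^'k^'d \<Rightarrow> real^'d \<Rightarrow> (real^'k) measure \<Rightarrow> ennreal" where
  "R_iid n H \<theta> \<rho> =
     (if \<not> invertible (Sig \<rho>) then \<infinity>
      else \<integral>\<^sup>+ X. ennreal ((norm (theta_hat n H \<rho> X - \<theta>))\<^sup>2)
             \<partial>(\<Pi>\<^sub>M m\<in>{..<n}. obs_law H \<theta> \<rho>))"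

definition perm_mat :: "('d \<Rightarrow> 'd) \<Rightarrow> real^'d^'d" where
  "perm_mat \<pi> = (\<chi> j i. if j = \<pi> i then 1 else 0)"

definition Pperm :: "real^'k^'d \<Rightarrow> ('d \<Rightarrow> 'd) \<Rightarrow> real^'k^'k" where
  "Pperm H \<pi> = transpose H ** perm_mat \<pi> ** H"

definition sym_law :: "real^'k^'d \<Rightarrow> (real^'k) measure \<Rightarrow> (real^'k) measure" where
  "sym_law H \<rho> = measure_of UNIV (sets borel)
     (\<lambda>A. (\<Sum>\<pi>\<in>{\<pi>. \<pi> permutes (UNIV::'d set)}.
             emeasure (distr \<rho> borel (\<lambda>x. Pperm H \<pi> *v x)) A) / of_nat (fact CARD('d)))"

end

theory Submission
  imports Defs
begin

locale hsetup =
  fixes H :: "real^'k^'d"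
  assumes H_orth: "transpose H ** H = mat 1"
    and H_span: "span (columns H) = {u. (\<Sum>i\<in>UNIV. u $ i) = 0}"
begin

lemma col_sum0: "(\<Sum>i\<in>UNIV. H $ i $ j) = 0"
proof -
  have "column j H \<in> span (columns H)"
    by (rule span_base) (auto simp: columns_def)
  then show ?thesis using H_span by (simp add: column_def)
qed

lemma Ht_ones: "transpose H *v ones = 0"
proof -
  have "(transpose H *v ones) $ j = 0" for j
    unfolding matrix_vector_mult_def transpose_def ones_def using col_sum0[of j] by simp
  then show ?thesis by (simp add: vec_eq_iff)
qed

lemma Ht_ones': "ones v* H = 0"
  using Ht_ones by simp

lemma span_range: "span (columns H) \<subseteq> range (\<lambda>c. H *v c)"
proof (rule span_minimal)
  show "columns H \<subseteq> range ((*v) H)"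
    by (auto simp: columns_image_basis)
  show "subspace (range ((*v) H))"
    by (rule linear_subspace_image) (auto intro: subspace_UNIV)
qed

lemma HHt_sum0: assumes "(\<Sum>i\<in>UNIV. u $ i) = 0" shows "H *v (transpose H *v u) = u"
proof -
  from assms H_span span_range obtain c where u: "u = H *v c" by blast
  have "H *v (transpose H *v u) = H *v ((transpose H ** H) *v c)"
    by (simp add: u matrix_vector_mul_assoc)
  also have "\<dots> = u" by (simp add: H_orth u)
  finally show ?thesis .
qed

lemma sum_ones_vec: "(\<Sum>i\<in>UNIV. (c *\<^sub>R (ones::real^'d)) $ i) = c * real CARD('d)"
  by (simp add: ones_def)

lemma HHt: "H *v (transpose H *v u) = u - ((\<Sum>i\<in>UNIV. u $ i) / real CARD('d)) *\<^sub>R ones"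
proof -
  let ?c = "(\<Sum>i\<in>UNIV. u $ i) / real CARD('d)"
  have s0: "(\<Sum>i\<in>UNIV. (u - ?c *\<^sub>R ones) $ i) = 0"
    by (simp add: sum_subtractf ones_def)
  have "transpose H *v u = transpose H *v (u - ?c *\<^sub>R ones)"
    by (simp add: matrix_vector_mult_diff_distrib matrix_vector_mult_scaleR Ht_ones' vector_matrix_mult_diff_rdistrib scaleR_vector_matrix_assoc)
  then show ?thesis using HHt_sum0[OF s0] by simp
qed

lemma inner_Hv: "(H *v x) \<bullet> (H *v y) = x \<bullet> y"
proof -
  have "(H *v x) \<bullet> (H *v y) = x \<bullet> (transpose H *v (H *v y))"
    by (metis dot_lmul_matrix vector_transpose_matrix)
  also have "\<dots> = x \<bullet> y" by (simp add: matrix_vector_mul_assoc H_orth)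
  finally show ?thesis .
qed

lemma norm_Hv: "norm (H *v x) = norm x"
  using inner_Hv[of x x] by (simp add: norm_eq_sqrt_inner)

lemma gam_inner: "gam H i \<bullet> x = (H *v x) $ i"
proof -
  have "gam H i \<bullet> x = axis i 1 \<bullet> (H *v x)"
    unfolding gam_def by (metis dot_lmul_matrix inner_commute transpose_transpose vector_transpose_matrix)
  then show ?thesis by (simp add: inner_axis')
qed

lemma hvec_eq: "hvec H \<theta> = transpose H *v \<theta>"
proof -
  have "(hvec H \<theta>) $ j = (transpose H *v \<theta>) $ j" for j
  proof -
    have "(hvec H \<theta>) $ j = (\<Sum>i\<in>UNIV. \<theta> $ i * (gam H i) $ j)"
      unfolding hvec_def by (simp add: sum_component)
    also have "\<dots> = (\<Sum>i\<in>UNIV. \<theta> $ i * H $ i $ j)"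
      unfolding gam_def matrix_vector_mult_def transpose_def axis_def
      by (simp add: if_distrib cong: if_cong)
    also have "\<dots> = (transpose H *v \<theta>) $ j"
      unfolding matrix_vector_mult_def transpose_def by (simp add: mult.commute)
    finally show ?thesis .
  qed
  then show ?thesis by (simp add: vec_eq_iff del: transpose_matrix_vector)
qed

lemma sum_Hv: "(\<Sum>i\<in>UNIV. (H *v x) $ i) = 0"
proof -
  have "(\<Sum>i\<in>UNIV. (H *v x) $ i) = (\<Sum>i\<in>UNIV. \<Sum>j\<in>UNIV. H $ i $ j * x $ j)"
    by (simp add: matrix_vector_mult_def)
  also have "\<dots> = (\<Sum>j\<in>UNIV. (\<Sum>i\<in>UNIV. H $ i $ j) * x $ j)"
    by (subst sum.swap) (simp add: sum_distrib_right)
  also have "\<dots> = 0" by (simp add: col_sum0)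
  finally show ?thesis .
qed

lemma Xd_sets: "Xd H \<in> sets borel"
proof -
  have "Xd H = (\<Inter>i. {x. 0 \<le> 1 + gam H i \<bullet> x})" by (auto simp: Xd_def)
  also have "\<dots> \<in> sets borel" by measurable
  finally show ?thesis .
qed

lemma Xd_bound: assumes x: "x \<in> Xd H" shows "norm x \<le> real CARD('d) ^ 2"
proof -
  have lo: "(H *v x) $ i \<ge> -1" for i using x unfolding Xd_def gam_inner by (smt (verit) mem_Collect_eq)
  have ab: "\<bar>(H *v x) $ i\<bar> \<le> real CARD('d)" for i
  proof -
    have "(H *v x) $ i = - (\<Sum>j\<in>UNIV-{i}. (H *v x) $ j)"
      using sum_Hv[of x] by (simp add: sum.remove[of UNIV i] algebra_simps)
    also have "\<dots> \<le> (\<Sum>j\<in>UNIV-{i}. 1)"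
      unfolding sum_negf[symmetric] by (rule sum_mono) (use lo in auto)
    also have "\<dots> \<le> real CARD('d)" by (simp add: card_Diff_singleton)
    moreover have "(1::real) \<le> real CARD('d)"
      using zero_less_card_finite[where 'a='d] by (simp add: Suc_le_eq)
    ultimately show ?thesis using lo[of i] unfolding abs_le_iff by linarith
  qed
  have "norm x = norm (H *v x)" by (simp add: norm_Hv)
  also have "\<dots> \<le> (\<Sum>i\<in>UNIV. \<bar>(H *v x) $ i\<bar>)" by (rule norm_le_l1_cart)
  also have "\<dots> \<le> (\<Sum>i\<in>(UNIV::'d set). real CARD('d))" by (rule sum_mono) (rule ab)
  also have "\<dots> = real CARD('d) ^ 2" by (simp add: power2_eq_square)
  finally show ?thesis .
qed

lemma dens_nonneg: assumes x: "x \<in> Xd H" and th: "\<theta> \<in> prob_simplex"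
  shows "0 \<le> 1 + hvec H \<theta> \<bullet> x"
proof -
  have "1 + hvec H \<theta> \<bullet> x = (\<Sum>i\<in>UNIV. \<theta> $ i * (1 + gam H i \<bullet> x))"
    using th unfolding hvec_def prob_simplex_def
    by (simp add: inner_sum_left sum.distrib algebra_simps)
  also have "\<dots> \<ge> 0" using x th unfolding Xd_def prob_simplex_def
    by (intro sum_nonneg mult_nonneg_nonneg) auto
  finally show ?thesis .
qed

lemma perm_mat_apply: assumes p: "p permutes (UNIV::'d set)"
  shows "(perm_mat p *v y) $ a = y $ (inv p a)"
proof -
  have "(perm_mat p *v y) $ a = (\<Sum>j\<in>UNIV. (if a = p j then 1 else 0) * y $ j)"
    by (simp add: matrix_vector_mult_def perm_mat_def)
  also have "\<dots> = (\<Sum>j\<in>UNIV. (if j = inv p a then y $ j else 0))"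
    by (rule sum.cong[OF refl]) (auto simp: permutes_inverses[OF p])
  also have "\<dots> = y $ (inv p a)" by simp
  finally show ?thesis .
qed

lemma sum_perm_vec: assumes p: "p permutes (UNIV::'d set)"
  shows "(\<Sum>a\<in>UNIV. (perm_mat p *v y) $ a) = (\<Sum>a\<in>UNIV. y $ a)"
proof -
  have "(\<Sum>a\<in>UNIV. (perm_mat p *v y) $ a) = (\<Sum>a\<in>UNIV. y $ (inv p a))"
    by (simp add: perm_mat_apply[OF p])
  also have "\<dots> = (\<Sum>a\<in>UNIV. y $ a)"
    using sum.permute[OF permutes_inv[OF p], of "\<lambda>a. y $ a"] by (simp add: o_def)
  finally show ?thesis .
qed

lemma norm_perm_vec: assumes p: "p permutes (UNIV::'d set)"
  shows "norm (perm_mat p *v (y::real^'d)) = norm y"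
proof -
  have "(perm_mat p *v y) \<bullet> (perm_mat p *v y) = (\<Sum>a\<in>UNIV. y $ (inv p a) * y $ (inv p a))"
    by (simp add: inner_vec_def perm_mat_apply[OF p])
  also have "\<dots> = (\<Sum>a\<in>UNIV. y $ a * y $ a)"
    using sum.permute[OF permutes_inv[OF p], of "\<lambda>a. y $ a * y $ a"] by (simp add: o_def)
  also have "\<dots> = y \<bullet> y" by (simp add: inner_vec_def)
  finally show ?thesis by (simp add: norm_eq_sqrt_inner)
qed

lemma norm_Ht_sum0: assumes "(\<Sum>i\<in>UNIV. z $ i) = 0" shows "norm (transpose H *v z) = norm z"
proof -
  have "(transpose H *v z) \<bullet> (transpose H *v z) = z \<bullet> (H *v (transpose H *v z))"
    by (metis dot_lmul_matrix transpose_matrix_vector)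
  also have "\<dots> = z \<bullet> z" using HHt_sum0[OF assms] by simp
  finally show ?thesis by (simp add: norm_eq_sqrt_inner)
qed

lemma Pperm_apply: "Pperm H p *v x = transpose H *v (perm_mat p *v (H *v x))"
  unfolding Pperm_def by (simp add: matrix_vector_mul_assoc matrix_mul_assoc del: transpose_matrix_vector)

lemma norm_Pperm: assumes p: "p permutes (UNIV::'d set)"
  shows "norm (Pperm H p *v x) = norm x"
  unfolding Pperm_apply
  by (simp only: norm_Ht_sum0 sum_perm_vec[OF p] sum_Hv norm_perm_vec[OF p] norm_Hv)

lemma H_Pperm: assumes p: "p permutes (UNIV::'d set)"
  shows "H *v (Pperm H p *v x) = perm_mat p *v (H *v x)"
  unfolding Pperm_apply by (rule HHt_sum0) (simp only: sum_perm_vec[OF p] sum_Hv)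

lemma Pperm_Xd: assumes p: "p permutes (UNIV::'d set)" and x: "x \<in> Xd H"
  shows "Pperm H p *v x \<in> Xd H"
proof -
  have "\<forall>i. 0 \<le> 1 + (H *v x) $ i" using x unfolding Xd_def gam_inner by simp
  then have "\<forall>i. 0 \<le> 1 + (H *v (Pperm H p *v x)) $ i"
    unfolding H_Pperm[OF p] perm_mat_apply[OF p] by simp
  then show ?thesis unfolding Xd_def gam_inner by simp
qed

lemma transpose_mv: "(transpose (A::real^'k^'d) *v z) $ l = (\<Sum>a\<in>UNIV. A $ a $ l * z $ a)"
  by (simp add: matrix_vector_mult_def transpose_def del: transpose_matrix_vector)

lemma Pperm_comp: assumes p: "p permutes (UNIV::'d set)"
  shows "(Pperm H p *v x) $ l = (\<Sum>a\<in>UNIV. H $ a $ l * (H *v x) $ (inv p a))"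
proof -
  have "(Pperm H p *v x) $ l = (\<Sum>a\<in>UNIV. H $ a $ l * (perm_mat p *v (H *v x)) $ a)"
    unfolding Pperm_apply by (rule transpose_mv)
  then show ?thesis by (simp add: perm_mat_apply[OF p])
qed

lemma G_inv: assumes q: "q permutes (UNIV::'d set)"
  shows "(\<Sum>p\<in>{p. p permutes (UNIV::'d set)}. f (p (q a)) (p (q b)) :: real)
       = (\<Sum>p\<in>{p. p permutes (UNIV::'d set)}. f (p a) (p b))"
  using sum_permutations_compose_right[OF q, of "\<lambda>p. f (p a) (p b)"] by (simp add: o_def)

lemma G_diag: "(\<Sum>p\<in>{p. p permutes (UNIV::'d set)}. f (p a) (p a) :: real)
       = (\<Sum>p\<in>{p. p permutes (UNIV::'d set)}. f (p c) (p c))"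
  using G_inv[OF permutes_swap_id[of a UNIV c], of f c c] by simp

lemma G_off: assumes ab: "a \<noteq> b" and ce: "c \<noteq> e"
  shows "(\<Sum>p\<in>{p. p permutes (UNIV::'d set)}. f (p a) (p b) :: real)
       = (\<Sum>p\<in>{p. p permutes (UNIV::'d set)}. f (p c) (p e))"
proof -
  let ?G = "\<lambda>a b. (\<Sum>p\<in>{p. p permutes (UNIV::'d set)}. f (p a) (p b) :: real)"
  define b' where "b' = Transposition.transpose a c b"
  have 1: "?G a b = ?G c b'"
    using G_inv[OF permutes_swap_id[of a UNIV c], of f a b] by (simp add: b'_def)
  have cb: "c \<noteq> b'" using ab by (auto simp: b'_def Transposition.transpose_def)
  have 2: "?G c b' = ?G c e"
    using G_inv[OF permutes_swap_id[of b' UNIV e], of f c b'] cb ce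
    by (simp add: transpose_def)
  show ?thesis using 1 2 by simp
qed

end

abbreviation Perms :: "('d::finite \<Rightarrow> 'd) set" where "Perms \<equiv> {p. p permutes (UNIV::'d set)}"

lemma Perms_fin: "finite (Perms :: ('d::finite \<Rightarrow> 'd) set)" by (rule finite_permutations) simp
lemma Perms_ne: "(Perms :: ('d::finite \<Rightarrow> 'd) set) \<noteq> {}" using permutes_id by blast
lemma Perms_card: "card (Perms :: ('d::finite \<Rightarrow> 'd) set) = fact CARD('d)"
  by (rule card_permutations) simp_all

lemma nn_pmf_Perms: "(\<integral>\<^sup>+p. g p \<partial>measure_pmf (pmf_of_set (Perms::('d::finite \<Rightarrow> 'd) set)))
   = sum g Perms / of_nat (card (Perms::('d::finite \<Rightarrow> 'd) set))"
  by (rule nn_integral_pmf_of_set[OF Perms_ne Perms_fin])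

lemma mv_meas[measurable]: "(\<lambda>x. (A::real^'k^'m) *v x) \<in> borel_measurable borel"
  by (intro borel_measurable_continuous_onI linear_continuous_on matrix_vector_mul_linear) 
     (simp add: linear_conv_bounded_linear)

context hsetup begin

definition symN :: "(real^'k) measure \<Rightarrow> ('d \<Rightarrow> 'd) \<Rightarrow> (real^'k) measure" where
  "symN \<rho> p = distr \<rho> borel (\<lambda>x. Pperm H p *v x)"

lemma symN_meas:
  assumes P: "prob_space \<rho>" and S: "sets \<rho> = sets borel"
  shows "symN \<rho> \<in> measurable (measure_pmf (pmf_of_set Perms)) (subprob_algebra borel)"
proof -
  have "symN \<rho> p \<in> space (subprob_algebra borel)" for p
  proof -
    have m: "(\<lambda>x. Pperm H p *v x) \<in> measurable \<rho> borel"
      using measurable_cong_sets[OF S refl] mv_meas by blast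
    interpret prob_space \<rho> by fact
    have "prob_space (symN \<rho> p)" unfolding symN_def by (rule prob_space_distr[OF m])
    then show ?thesis by (auto simp: space_subprob_algebra symN_def prob_space_imp_subprob_space)
  qed
  then show ?thesis by simp
qed

lemma sym_bind:
  assumes P: "prob_space \<rho>" and S: "sets \<rho> = sets borel"
  shows "sym_law H \<rho> = measure_pmf (pmf_of_set Perms) \<bind> symN \<rho>"
proof -
  let ?M = "measure_pmf (pmf_of_set Perms) \<bind> symN \<rho>"
  have sM: "sets ?M = sets borel"
    by (rule sets_bind_measurable[OF symN_meas[OF P S]]) simp
  have spM: "space ?M = UNIV" using sets_eq_imp_space_eq[OF sM] by simp
  have em: "emeasure ?M A = (\<Sum>p\<in>Perms. emeasure (distr \<rho> borel (\<lambda>x. Pperm H p *v x)) A) / of_nat (fact CARD('d))"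
    if A: "A \<in> sets borel" for A
  proof -
    have "emeasure ?M A = (\<integral>\<^sup>+p. emeasure (symN \<rho> p) A \<partial>measure_pmf (pmf_of_set Perms))"
      by (rule emeasure_bind[OF _ symN_meas[OF P S] A]) simp
    also have "\<dots> = (\<Sum>p\<in>Perms. emeasure (symN \<rho> p) A) / of_nat (card (Perms::('d \<Rightarrow> 'd) set))"
      by (rule nn_pmf_Perms)
    finally show ?thesis by (simp add: Perms_card symN_def)
  qed
  have "sym_law H \<rho> = measure_of UNIV (sets borel) (emeasure ?M)"
    unfolding sym_law_def
  proof (rule measure_of_eq)
    have "sigma_sets UNIV (sets borel) = sets (borel :: (real^'k) measure)"
      using sets.sigma_sets_eq[of "borel :: (real^'k) measure"] by simp
    then show "a \<in> sigma_sets UNIV (sets borel) \<Longrightarrow>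
      (\<Sum>\<pi>\<in>Perms. emeasure (distr \<rho> borel (\<lambda>x. Pperm H \<pi> *v x)) a) / of_nat (fact CARD('d)) = emeasure ?M a" for a
      using em[of a] by simp
  qed simp
  also have "\<dots> = ?M"
    using measure_of_of_measure[of ?M] by (simp add: spM sM)
  finally show ?thesis .
qed

lemma sym_nn:
  assumes P: "prob_space \<rho>" and S: "sets \<rho> = sets borel" and f: "f \<in> borel_measurable borel"
  shows "(\<integral>\<^sup>+x. f x \<partial>sym_law H \<rho>) = (\<Sum>p\<in>Perms. \<integral>\<^sup>+x. f (Pperm H p *v x) \<partial>\<rho>) / of_nat (fact CARD('d))"
proof -
  have m: "(\<lambda>x. Pperm H p *v x) \<in> measurable \<rho> borel" for p
    using measurable_cong_sets[OF S refl] mv_meas by blast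
  have "(\<integral>\<^sup>+x. f x \<partial>sym_law H \<rho>) = (\<integral>\<^sup>+p. \<integral>\<^sup>+x. f x \<partial>symN \<rho> p \<partial>measure_pmf (pmf_of_set Perms))"
    unfolding sym_bind[OF P S] by (rule nn_integral_bind[OF f symN_meas[OF P S]])
  also have "\<dots> = (\<Sum>p\<in>Perms. \<integral>\<^sup>+x. f x \<partial>symN \<rho> p) / of_nat (card (Perms::('d \<Rightarrow> 'd) set))"
    by (rule nn_pmf_Perms)
  also have "\<dots> = (\<Sum>p\<in>Perms. \<integral>\<^sup>+x. f (Pperm H p *v x) \<partial>\<rho>) / of_nat (fact CARD('d))"
    unfolding symN_def Perms_card using f
    by (simp add: nn_integral_distr[OF m])
  finally show ?thesis .
qed

lemma sym_sets: "sets (sym_law H \<rho>) = sets borel"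
  unfolding sym_law_def using sets.sigma_sets_eq[of "borel :: (real^'k) measure"] by simp

lemma sym_space: "space (sym_law H \<rho>) = UNIV"
  using sets_eq_imp_space_eq[OF sym_sets] by simp

lemma sym_prob:
  assumes P: "prob_space \<rho>" and S: "sets \<rho> = sets borel"
  shows "prob_space (sym_law H \<rho>)"
proof (rule prob_spaceI)
  interpret prob_space \<rho> by fact
  have "emeasure (sym_law H \<rho>) (space (sym_law H \<rho>)) = (\<integral>\<^sup>+x. 1 \<partial>sym_law H \<rho>)"
    by simp
  also have "\<dots> = (\<Sum>p\<in>(Perms::('d \<Rightarrow> 'd) set). \<integral>\<^sup>+x. 1 \<partial>\<rho>) / of_nat (fact CARD('d))"
    using sym_nn[OF P S, of "\<lambda>_. 1"] by simp
  also have "\<dots> = 1"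
  proof -
    have 1: "(\<integral>\<^sup>+x. 1 \<partial>\<rho>) = 1" using emeasure_space_1 by simp
    have "(\<Sum>p\<in>(Perms::('d \<Rightarrow> 'd) set). \<integral>\<^sup>+x. 1 \<partial>\<rho>) = of_nat (fact CARD('d))"
      unfolding 1 using Perms_card[where 'd='d] by simp
    moreover have "(of_nat (fact CARD('d)) :: ennreal) \<noteq> 0" by simp
    moreover have "(of_nat (fact CARD('d)) :: ennreal) < top" using of_nat_less_top by blast
    ultimately show ?thesis by (metis ennreal_divide_self)
  qed
  finally show "emeasure (sym_law H \<rho>) (space (sym_law H \<rho>)) = 1" .
qed

lemma sym_AE:
  assumes P: "prob_space \<rho>" and S: "sets \<rho> = sets borel" and Q: "{x. Pr x} \<in> sets borel"
    and ae: "\<And>p. p \<in> Perms \<Longrightarrow> AE x in \<rho>. Pr (Pperm H p *v x)"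
  shows "AE x in sym_law H \<rho>. Pr x"
proof -
  let ?N = "{x. \<not> Pr x}"
  have "?N = space borel - {x. Pr x}" by auto
  then have N: "?N \<in> sets borel" using sets.compl_sets[OF Q] by simp
  have m: "(\<lambda>x. Pperm H p *v x) \<in> measurable \<rho> borel" for p
    using measurable_cong_sets[OF S refl] mv_meas by blast
  have "emeasure (sym_law H \<rho>) ?N = (\<integral>\<^sup>+x. indicator ?N x \<partial>sym_law H \<rho>)"
    using N by (simp add: sym_sets)
  also have "\<dots> = (\<Sum>p\<in>Perms. \<integral>\<^sup>+x. indicator ?N (Pperm H p *v x) \<partial>\<rho>) / of_nat (fact CARD('d))"
    by (rule sym_nn[OF P S]) (use N in simp)
  also have "\<dots> = 0"
  proof -
    have "(\<integral>\<^sup>+x. indicator ?N (Pperm H p *v x) \<partial>\<rho>) = 0" if "p \<in> Perms" for p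
      using ae[OF that] by (subst nn_integral_cong_AE[where v="\<lambda>_. 0"]) (auto elim!: eventually_mono simp: indicator_def)
    then show ?thesis by simp
  qed
  finally have "emeasure (sym_law H \<rho>) ?N = 0" .
  then show ?thesis
    by (subst AE_iff_measurable[where N="?N"]) (auto simp: sym_space sym_sets N)
qed

lemma sym_int_nn:
  fixes g :: "real^'k \<Rightarrow> real" and B :: real
  assumes P: "prob_space \<rho>" and S: "sets \<rho> = sets borel" and g: "g \<in> borel_measurable borel"
    and g0: "\<And>x. 0 \<le> g x" and gB: "\<And>x. g x \<le> B"
  shows "(\<integral>x. g x \<partial>sym_law H \<rho>) = (\<Sum>p\<in>Perms. \<integral>x. g (Pperm H p *v x) \<partial>\<rho>) / fact CARD('d)"
proof -
  interpret R: prob_space \<rho> by fact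
  interpret Q: prob_space "sym_law H \<rho>" by (rule sym_prob[OF P S])
  have m: "(\<lambda>x. Pperm H p *v x) \<in> measurable \<rho> borel" for p
    using measurable_cong_sets[OF S refl] mv_meas by blast
  have gQ: "g \<in> borel_measurable (sym_law H \<rho>)"
    using measurable_cong_sets[OF sym_sets refl] g by blast
  have gR: "(\<lambda>x. g (Pperm H p *v x)) \<in> borel_measurable \<rho>" for p
    using measurable_comp[OF m g] by (simp add: o_def)
  have iQ: "integrable (sym_law H \<rho>) g"
    by (rule Q.integrable_const_bound[where B=B]) (use g0 gB gQ in auto)
  have iR: "integrable \<rho> (\<lambda>x. g (Pperm H p *v x))" for p
    by (rule R.integrable_const_bound[where B=B]) (use g0 gB gR in auto)
  have "ennreal (\<integral>x. g x \<partial>sym_law H \<rho>) = (\<integral>\<^sup>+x. ennreal (g x) \<partial>sym_law H \<rho>)"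
    by (rule nn_integral_eq_integral[OF iQ, symmetric]) (use g0 in auto)
  also have "\<dots> = (\<Sum>p\<in>Perms. \<integral>\<^sup>+x. ennreal (g (Pperm H p *v x)) \<partial>\<rho>) / of_nat (fact CARD('d))"
    by (rule sym_nn[OF P S]) (use g in simp)
  also have "\<dots> = (\<Sum>p\<in>Perms. ennreal (\<integral>x. g (Pperm H p *v x) \<partial>\<rho>)) / of_nat (fact CARD('d))"
    by (subst nn_integral_eq_integral[OF iR]) (use g0 in auto)
  also have "\<dots> = ennreal ((\<Sum>p\<in>Perms. \<integral>x. g (Pperm H p *v x) \<partial>\<rho>) / fact CARD('d))"
  proof -
    have nn: "\<And>p. 0 \<le> (\<integral>x. g (Pperm H p *v x) \<partial>\<rho>)" using g0 by (simp add: integral_nonneg)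
    have "(\<Sum>p\<in>(Perms::('d \<Rightarrow> 'd) set). ennreal (\<integral>x. g (Pperm H p *v x) \<partial>\<rho>))
        = ennreal (\<Sum>p\<in>Perms. \<integral>x. g (Pperm H p *v x) \<partial>\<rho>)"
      using nn by (simp add: sum_ennreal)
    moreover have "(of_nat (fact CARD('d)) :: ennreal) = ennreal (fact CARD('d))"
      by (metis ennreal_of_nat_eq_real_of_nat of_nat_fact)
    ultimately show ?thesis
      by (simp add: divide_ennreal nn sum_nonneg)
  qed
  finally show ?thesis
    by (subst (asm) ennreal_inj) (auto intro!: divide_nonneg_nonneg sum_nonneg integral_nonneg simp: g0)
qed

lemma sym_int:
  fixes g :: "real^'k \<Rightarrow> real" and B :: real
  assumes P: "prob_space \<rho>" and S: "sets \<rho> = sets borel" and g: "g \<in> borel_measurable borel"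
    and gB: "\<And>x. \<bar>g x\<bar> \<le> B"
  shows "(\<integral>x. g x \<partial>sym_law H \<rho>) = (\<Sum>p\<in>Perms. \<integral>x. g (Pperm H p *v x) \<partial>\<rho>) / fact CARD('d)"
proof -
  interpret R: prob_space \<rho> by fact
  interpret Q: prob_space "sym_law H \<rho>" by (rule sym_prob[OF P S])
  let ?a = "\<lambda>x. max (g x) 0" and ?b = "\<lambda>x. max (- g x) 0"
  have m: "(\<lambda>x. Pperm H p *v x) \<in> measurable \<rho> borel" for p
    using measurable_cong_sets[OF S refl] mv_meas by blast
  have ma: "?a \<in> borel_measurable borel" using g by measurable
  have mb: "?b \<in> borel_measurable borel" using g by measurable
  have gab: "g x = ?a x - ?b x" for x by auto
  have B0: "0 \<le> B" using gB[of undefined] by auto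
  have aB: "?a x \<le> B" and bB: "?b x \<le> B" for x
    using gB[of x] B0 unfolding abs_le_iff by linarith+
  have ia: "(\<integral>x. ?a x \<partial>sym_law H \<rho>) = (\<Sum>p\<in>Perms. \<integral>x. ?a (Pperm H p *v x) \<partial>\<rho>) / fact CARD('d)"
    by (rule sym_int_nn[OF P S ma, where B=B]) (simp, rule aB)
  have ib: "(\<integral>x. ?b x \<partial>sym_law H \<rho>) = (\<Sum>p\<in>Perms. \<integral>x. ?b (Pperm H p *v x) \<partial>\<rho>) / fact CARD('d)"
    by (rule sym_int_nn[OF P S mb, where B=B]) (simp, rule bB)
  have intQ: "integrable (sym_law H \<rho>) f" if "f \<in> borel_measurable borel" "\<And>x. \<bar>f x\<bar> \<le> B" for f
    by (rule Q.integrable_const_bound[where B=B]) (use that measurable_cong_sets[OF sym_sets refl] in auto)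
  have intR: "integrable \<rho> (\<lambda>x. f (Pperm H p *v x))" if "f \<in> borel_measurable borel" "\<And>x. \<bar>f x\<bar> \<le> B" for f p
    by (rule R.integrable_const_bound[where B=B]) (use that measurable_comp[OF m that(1)] in \<open>auto simp: o_def\<close>)
  have bnd: "\<bar>?a x\<bar> \<le> B" "\<bar>?b x\<bar> \<le> B" for x using aB[of x] bB[of x] by auto
  have "(\<integral>x. g x \<partial>sym_law H \<rho>) = (\<integral>x. ?a x - ?b x \<partial>sym_law H \<rho>)"
    by (rule Bochner_Integration.integral_cong[OF refl]) (rule gab)
  also have "\<dots> = (\<integral>x. ?a x \<partial>sym_law H \<rho>) - (\<integral>x. ?b x \<partial>sym_law H \<rho>)"
    by (rule Bochner_Integration.integral_diff[OF intQ[OF ma] intQ[OF mb]]) (use bnd in auto)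
  also have "\<dots> = (\<Sum>p\<in>Perms. (\<integral>x. ?a (Pperm H p *v x) \<partial>\<rho>) - (\<integral>x. ?b (Pperm H p *v x) \<partial>\<rho>)) / fact CARD('d)"
    unfolding ia ib by (simp add: sum_subtractf diff_divide_distrib)
  also have "\<dots> = (\<Sum>p\<in>Perms. \<integral>x. g (Pperm H p *v x) \<partial>\<rho>) / fact CARD('d)"
  proof -
    have "(\<integral>x. ?a (Pperm H p *v x) \<partial>\<rho>) - (\<integral>x. ?b (Pperm H p *v x) \<partial>\<rho>) = (\<integral>x. g (Pperm H p *v x) \<partial>\<rho>)" for p
    proof -
      have "(\<integral>x. ?a (Pperm H p *v x) \<partial>\<rho>) - (\<integral>x. ?b (Pperm H p *v x) \<partial>\<rho>)
         = (\<integral>x. ?a (Pperm H p *v x) - ?b (Pperm H p *v x) \<partial>\<rho>)"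
        by (rule Bochner_Integration.integral_diff[OF intR[OF ma] intR[OF mb], symmetric]) (use bnd in auto)
      also have "\<dots> = (\<integral>x. g (Pperm H p *v x) \<partial>\<rho>)"
        by (rule Bochner_Integration.integral_cong[OF refl]) (rule gab[symmetric])
      finally show ?thesis .
    qed
    then show ?thesis by simp
  qed
  finally show ?thesis .
qed

lemma sym_AE_Xd:
  assumes P: "prob_space \<rho>" and S: "sets \<rho> = sets borel" and X: "AE x in \<rho>. x \<in> Xd H"
  shows "AE x in sym_law H \<rho>. x \<in> Xd H"
proof (rule sym_AE[OF P S])
  show "{x. x \<in> Xd H} \<in> sets borel" using Xd_sets by simp
  show "AE x in \<rho>. Pperm H p *v x \<in> Xd H" if "p \<in> Perms" for p
    using X by eventually_elim (use Pperm_Xd that in auto)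
qed

end

lemma cont_bound:
  fixes g :: "real^'k \<Rightarrow> real"
  assumes "continuous_on UNIV g"
  obtains B where "\<And>x. norm x \<le> C \<Longrightarrow> \<bar>g x\<bar> \<le> B"
proof -
  have "compact (g ` cball 0 C)"
    by (rule compact_continuous_image) (use assms continuous_on_subset in auto)
  then obtain B where "\<forall>y\<in>g ` cball 0 C. norm y \<le> B"
    using compact_imp_bounded bounded_iff by metis
  then have "\<forall>x. norm x \<le> C \<longrightarrow> \<bar>g x\<bar> \<le> B" by (auto simp: mem_cball_0)
  then show ?thesis using that by blast
qed

lemma int_cont:
  fixes g :: "real^'k \<Rightarrow> real"
  assumes F: "finite_measure M" and S: "sets M = sets borel" and X: "AE x in M. norm x \<le> C"
    and g: "continuous_on UNIV g"
  shows "integrable M g"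
proof -
  interpret finite_measure M by fact
  obtain B where B: "\<And>x. norm x \<le> C \<Longrightarrow> \<bar>g x\<bar> \<le> B" using cont_bound[OF g] by blast
  have gm: "g \<in> borel_measurable M"
    using measurable_cong_sets[OF S refl] borel_measurable_continuous_onI[OF g] by blast
  show ?thesis
    by (rule integrable_const_bound[where B=B]) (use X B gm in \<open>auto elim!: eventually_mono\<close>)
qed

context hsetup begin

lemma sym_int_cont:
  fixes g :: "real^'k \<Rightarrow> real"
  assumes P: "prob_space \<rho>" and S: "sets \<rho> = sets borel" and X: "AE x in \<rho>. x \<in> Xd H"
    and g: "continuous_on UNIV g"
  shows "(\<integral>x. g x \<partial>sym_law H \<rho>) = (\<Sum>p\<in>Perms. \<integral>x. g (Pperm H p *v x) \<partial>\<rho>) / fact CARD('d)"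
proof -
  define C where "C = real CARD('d) ^ 2"
  obtain B where B: "\<And>x. norm x \<le> C \<Longrightarrow> \<bar>g x\<bar> \<le> B" using cont_bound[OF g] by blast
  define g' where "g' x = (if x \<in> cball 0 C then g x else 0)" for x
  have gm: "g \<in> borel_measurable borel" using borel_measurable_continuous_onI[OF g] .
  have g'm: "g' \<in> borel_measurable borel" unfolding g'_def
    by (rule measurable_If_set[OF gm]) auto
  have B0: "0 \<le> B" using B[of 0] C_def by auto
  have g'B: "\<bar>g' x\<bar> \<le> B" for x using B B0 by (auto simp: g'_def)
  have m: "(\<lambda>x. Pperm H p *v x) \<in> measurable \<rho> borel" for p
    using measurable_cong_sets[OF S refl] mv_meas by blast
  have XQ: "AE x in sym_law H \<rho>. x \<in> Xd H" by (rule sym_AE_Xd[OF P S X])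
  have "(\<integral>x. g x \<partial>sym_law H \<rho>) = (\<integral>x. g' x \<partial>sym_law H \<rho>)"
  proof (rule integral_cong_AE)
    show "g \<in> borel_measurable (sym_law H \<rho>)" "g' \<in> borel_measurable (sym_law H \<rho>)"
      using gm g'm measurable_cong_sets[OF sym_sets refl] by blast+
    show "AE x in sym_law H \<rho>. g x = g' x"
      using XQ by eventually_elim (use Xd_bound in \<open>auto simp: g'_def C_def\<close>)
  qed
  also have "\<dots> = (\<Sum>p\<in>Perms. \<integral>x. g' (Pperm H p *v x) \<partial>\<rho>) / fact CARD('d)"
    by (rule sym_int[OF P S g'm g'B])
  also have "\<dots> = (\<Sum>p\<in>Perms. \<integral>x. g (Pperm H p *v x) \<partial>\<rho>) / fact CARD('d)"
  proof -
    have "(\<integral>x. g' (Pperm H p *v x) \<partial>\<rho>) = (\<integral>x. g (Pperm H p *v x) \<partial>\<rho>)" if p: "p \<in> Perms" for p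
    proof (rule integral_cong_AE)
      show "(\<lambda>x. g' (Pperm H p *v x)) \<in> borel_measurable \<rho>" "(\<lambda>x. g (Pperm H p *v x)) \<in> borel_measurable \<rho>"
        using measurable_comp[OF m g'm] measurable_comp[OF m gm] by (auto simp: o_def)
      show "AE x in \<rho>. g' (Pperm H p *v x) = g (Pperm H p *v x)"
        using X by eventually_elim (use Xd_bound Pperm_Xd p in \<open>auto simp: g'_def C_def\<close>)
    qed
    then show ?thesis by simp
  qed
  finally show ?thesis .
qed

end

locale rsetup = hsetup H for H :: "real^'k^'d" +
  fixes \<mu> :: "(real^'k) measure" and \<theta> :: "real^'d"
  assumes P: "prob_space \<mu>" and S: "sets \<mu> = sets borel" and X: "AE x in \<mu>. x \<in> Xd H"
    and M0: "\<And>j. (\<integral>x. x $ j \<partial>\<mu>) = 0"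
    and th: "\<theta> \<in> prob_simplex"
begin

abbreviation "hh \<equiv> hvec H \<theta>"
abbreviation "\<nu> \<equiv> obs_law H \<theta> \<mu>"
definition Dn :: "real^'k \<Rightarrow> real" where "Dn z = 1 + hh \<bullet> z"

interpretation M: prob_space \<mu> by (rule P)

lemma Dn_cont: "continuous_on UNIV Dn"
  unfolding Dn_def by (intro continuous_intros)

lemma Dn_meas: "Dn \<in> borel_measurable \<mu>"
  using measurable_cong_sets[OF S refl] borel_measurable_continuous_onI[OF Dn_cont] by blast

lemma Dn_nn: "AE x in \<mu>. 0 \<le> Dn x"
  using X by eventually_elim (use dens_nonneg th in \<open>auto simp: Dn_def\<close>)

lemma nu_def': "\<nu> = density \<mu> (\<lambda>x. ennreal (Dn x))"
  by (simp add: obs_law_def Dn_def)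

lemma nu_sets: "sets \<nu> = sets borel"
  by (simp add: nu_def' S)

lemma bnd_mu: "AE x in \<mu>. norm x \<le> real CARD('d) ^ 2"
  using X by eventually_elim (rule Xd_bound)

lemma int_mu: "continuous_on UNIV g \<Longrightarrow> integrable \<mu> (g :: real^'k \<Rightarrow> real)"
  by (rule int_cont[OF _ S bnd_mu]) (simp add: M.finite_measure_axioms)

lemma meas_mu: "continuous_on UNIV g \<Longrightarrow> (g :: real^'k \<Rightarrow> real) \<in> borel_measurable \<mu>"
  using measurable_cong_sets[OF S refl] borel_measurable_continuous_onI by blast

lemma int_Dn: "(\<integral>x. Dn x * g x \<partial>\<mu>) = (\<integral>x. g x \<partial>\<mu>) + (\<Sum>l\<in>UNIV. hh $ l * (\<integral>x. x $ l * g x \<partial>\<mu>))"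
  if g: "continuous_on UNIV g" for g :: "real^'k \<Rightarrow> real"
proof -
  have "(\<integral>x. Dn x * g x \<partial>\<mu>) = (\<integral>x. g x + (\<Sum>l\<in>UNIV. hh $ l * (x $ l * g x)) \<partial>\<mu>)"
    by (rule Bochner_Integration.integral_cong[OF refl])
       (simp add: Dn_def inner_vec_def algebra_simps sum_distrib_left sum_distrib_right)
  also have "\<dots> = (\<integral>x. g x \<partial>\<mu>) + (\<integral>x. (\<Sum>l\<in>UNIV. hh $ l * (x $ l * g x)) \<partial>\<mu>)"
    by (rule Bochner_Integration.integral_add) (use g in \<open>auto intro!: int_mu continuous_intros\<close>)
  also have "(\<integral>x. (\<Sum>l\<in>UNIV. hh $ l * (x $ l * g x)) \<partial>\<mu>) = (\<Sum>l\<in>UNIV. \<integral>x. hh $ l * (x $ l * g x) \<partial>\<mu>)"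
    by (rule Bochner_Integration.integral_sum) (use g in \<open>auto intro!: int_mu continuous_intros\<close>)
  also have "\<dots> = (\<Sum>l\<in>UNIV. hh $ l * (\<integral>x. x $ l * g x \<partial>\<mu>))"
    by simp
  finally show ?thesis .
qed

lemma nu_prob: "prob_space \<nu>"
proof (rule prob_spaceI)
  have "emeasure \<nu> (space \<nu>) = (\<integral>\<^sup>+x. ennreal (Dn x) \<partial>\<mu>)"
    unfolding nu_def' using Dn_meas by (simp add: emeasure_density)
  also have "\<dots> = ennreal (\<integral>x. Dn x \<partial>\<mu>)"
    by (rule nn_integral_eq_integral[OF int_mu[OF Dn_cont] Dn_nn])
  also have "(\<integral>x. Dn x \<partial>\<mu>) = 1"
    using int_Dn[of "\<lambda>_. 1"] by (simp add: M0 M.prob_space)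
  finally show "emeasure \<nu> (space \<nu>) = 1" by simp
qed

interpretation N: prob_space \<nu> by (rule nu_prob)

lemma X_nu: "AE x in \<nu>. x \<in> Xd H"
  unfolding nu_def' using X Dn_meas by (subst AE_density) (auto elim!: eventually_mono)

lemma int_nu: "continuous_on UNIV g \<Longrightarrow> integrable \<nu> (g :: real^'k \<Rightarrow> real)"
  by (rule int_cont[OF _ nu_sets]) (auto simp: N.finite_measure_axioms intro: X_nu[THEN eventually_mono] Xd_bound)

lemma integral_nu: "continuous_on UNIV g \<Longrightarrow> (\<integral>x. g x \<partial>\<nu>) = (\<integral>x. Dn x * g x \<partial>\<mu>)"
  for g :: "real^'k \<Rightarrow> real"
  unfolding nu_def' by (subst integral_density) (auto simp: meas_mu Dn_meas Dn_nn)

lemma nu_mean: "(\<integral>x. x $ j \<partial>\<nu>) = (Sig \<mu> *v hh) $ j"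
proof -
  have "(\<integral>x. x $ j \<partial>\<nu>) = (\<integral>x. Dn x * x $ j \<partial>\<mu>)"
    by (rule integral_nu) (intro continuous_intros)
  also have "\<dots> = (\<Sum>l\<in>UNIV. hh $ l * (\<integral>x. x $ l * x $ j \<partial>\<mu>))"
    by (subst int_Dn) (auto simp: M0 intro!: continuous_intros)
  also have "\<dots> = (Sig \<mu> *v hh) $ j"
    by (simp add: Sig_def matrix_vector_mult_def mult.commute)
  finally show ?thesis .
qed

definition Am where "Am = matrix_inv (Sig \<mu>)"

lemma Am_Sig: assumes "invertible (Sig \<mu>)" shows "Am ** Sig \<mu> = mat 1"
  using assms unfolding Am_def invertible_def matrix_inv_def by (metis (mono_tags, lifting) someI_ex)

lemma Am_comp: "(Am *v x) $ i = (\<Sum>j\<in>UNIV. Am $ i $ j * x $ j)"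
  by (simp add: matrix_vector_mult_def)

lemma nu_Amean: assumes I: "invertible (Sig \<mu>)" shows "(\<integral>x. (Am *v x) $ i \<partial>\<nu>) = hh $ i"
proof -
  have "(\<integral>x. (Am *v x) $ i \<partial>\<nu>) = (\<integral>x. (\<Sum>j\<in>UNIV. Am $ i $ j * x $ j) \<partial>\<nu>)"
    by (simp add: Am_comp)
  also have "\<dots> = (\<Sum>j\<in>UNIV. Am $ i $ j * (\<integral>x. x $ j \<partial>\<nu>))"
    by (subst Bochner_Integration.integral_sum) (auto intro!: int_nu continuous_intros)
  also have "\<dots> = (Am *v (Sig \<mu> *v hh)) $ i"
    by (simp add: nu_mean Am_comp)
  also have "\<dots> = hh $ i"
    by (simp add: matrix_vector_mul_assoc Am_Sig[OF I])
  finally show ?thesis .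
qed

definition Yi :: "'k \<Rightarrow> real^'k \<Rightarrow> real" where "Yi i x = (Am *v x) $ i - hh $ i"

lemma Yi_cont: "continuous_on UNIV (Yi i)"
  unfolding Yi_def by (intro continuous_intros)

lemma nu_Y: assumes I: "invertible (Sig \<mu>)" shows "(\<integral>x. Yi i x \<partial>\<nu>) = 0"
proof -
  have "(\<integral>x. Yi i x \<partial>\<nu>) = (\<integral>x. (Am *v x) $ i \<partial>\<nu>) - (\<integral>x. hh $ i \<partial>\<nu>)"
    unfolding Yi_def by (rule Bochner_Integration.integral_diff) (auto intro!: int_nu continuous_intros)
  then show ?thesis by (simp add: nu_Amean[OF I] N.prob_space)
qed

lemma nu_Y2: assumes I: "invertible (Sig \<mu>)"
  shows "(\<integral>x. (Yi i x)\<^sup>2 \<partial>\<nu>) = (\<integral>x. ((Am *v x) $ i)\<^sup>2 \<partial>\<nu>) - (hh $ i)\<^sup>2"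
proof -
  have "(\<integral>x. (Yi i x)\<^sup>2 \<partial>\<nu>) = (\<integral>x. ((Am *v x) $ i)\<^sup>2 - (2 * hh $ i) * (Am *v x) $ i + (hh $ i)\<^sup>2 \<partial>\<nu>)"
    unfolding Yi_def by (rule Bochner_Integration.integral_cong[OF refl]) (simp add: power2_eq_square algebra_simps)
  also have "\<dots> = (\<integral>x. ((Am *v x) $ i)\<^sup>2 \<partial>\<nu>) - (2 * hh $ i) * (\<integral>x. (Am *v x) $ i \<partial>\<nu>) + (hh $ i)\<^sup>2"
    by (subst Bochner_Integration.integral_add Bochner_Integration.integral_diff;
        (auto intro!: int_nu continuous_intros simp: N.prob_space)?)+
  also have "\<dots> = (\<integral>x. ((Am *v x) $ i)\<^sup>2 \<partial>\<nu>) - (hh $ i)\<^sup>2"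
    by (simp add: nu_Amean[OF I] power2_eq_square)
  finally show ?thesis .
qed

lemma prod_Y:
  fixes n m m' :: nat
  assumes I: "invertible (Sig \<mu>)" and m: "m < n" and m': "m' < n"
  shows "(\<integral>x. Yi i (x m) * Yi i (x m') \<partial>PiM {..<n} (\<lambda>_. \<nu>))
       = (if m = m' then (\<integral>z. (Yi i z)\<^sup>2 \<partial>\<nu>) else 0)"
proof -
  interpret PS: product_sigma_finite "\<lambda>_::nat. \<nu>"
    by unfold_locales
  define f where "f j z = (if j = m then Yi i z else 1) * (if j = m' then Yi i z else 1)" for j z
  have fint: "integrable \<nu> (f j)" for j
    by (cases "j = m"; cases "j = m'") (auto simp: f_def intro!: int_nu continuous_intros Yi_cont)
  have pr: "(\<Prod>j\<in>{..<n}. f j (x j)) = Yi i (x m) * Yi i (x m')" for x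
  proof -
    have a: "(\<Prod>j\<in>{..<n}. if j = m then Yi i (x j) else 1) = Yi i (x m)"
      using m by (subst prod.delta[OF finite_lessThan]) simp
    have b: "(\<Prod>j\<in>{..<n}. if j = m' then Yi i (x j) else 1) = Yi i (x m')"
      using m' by (subst prod.delta[OF finite_lessThan]) simp
    show ?thesis unfolding f_def prod.distrib a b ..
  qed
  have "(\<integral>x. Yi i (x m) * Yi i (x m') \<partial>PiM {..<n} (\<lambda>_. \<nu>))
      = (\<integral>x. (\<Prod>j\<in>{..<n}. f j (x j)) \<partial>PiM {..<n} (\<lambda>_. \<nu>))"
    by (simp add: pr)
  also have "\<dots> = (\<Prod>j\<in>{..<n}. integral\<^sup>L \<nu> (f j))"
    by (rule PS.product_integral_prod) (auto intro: fint)
  also have "\<dots> = (if m = m' then (\<integral>z. (Yi i z)\<^sup>2 \<partial>\<nu>) else 0)"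
  proof (cases "m = m'")
    case True
    have "integral\<^sup>L \<nu> (f j) = (if j = m then (\<integral>z. (Yi i z)\<^sup>2 \<partial>\<nu>) else 1)" for j
      using True by (auto simp: f_def[abs_def] power2_eq_square N.prob_space)
    then show ?thesis using True m by (simp add: prod.delta)
  next
    case False
    have "integral\<^sup>L \<nu> (f m) = 0" using False by (simp add: f_def[abs_def] nu_Y[OF I])
    then have "(\<Prod>j\<in>{..<n}. integral\<^sup>L \<nu> (f j)) = 0" using m by (intro prod_zero) auto
    then show ?thesis using False by simp
  qed
  finally show ?thesis .
qed

lemma int_Y:
  fixes n m m' :: nat
  assumes m: "m < n" and m': "m' < n"
  shows "integrable (PiM {..<n} (\<lambda>_. \<nu>)) (\<lambda>x. Yi i (x m) * Yi i (x m'))"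
proof -
  interpret PS: product_sigma_finite "\<lambda>_::nat. \<nu>"
    by unfold_locales
  define f where "f j z = (if j = m then Yi i z else 1) * (if j = m' then Yi i z else 1)" for j z
  have fint: "integrable \<nu> (f j)" for j
    by (cases "j = m"; cases "j = m'") (auto simp: f_def intro!: int_nu continuous_intros Yi_cont)
  have pr: "(\<Prod>j\<in>{..<n}. f j (x j)) = Yi i (x m) * Yi i (x m')" for x
  proof -
    have a: "(\<Prod>j\<in>{..<n}. if j = m then Yi i (x j) else 1) = Yi i (x m)"
      using m by (subst prod.delta[OF finite_lessThan]) simp
    have b: "(\<Prod>j\<in>{..<n}. if j = m' then Yi i (x j) else 1) = Yi i (x m')"
      using m' by (subst prod.delta[OF finite_lessThan]) simp
    show ?thesis unfolding f_def prod.distrib a b ..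
  qed
  have "integrable (PiM {..<n} (\<lambda>_. \<nu>)) (\<lambda>x. (\<Prod>j\<in>{..<n}. f j (x j)))"
    by (rule PS.product_integrable_prod) (auto intro: fint)
  then show ?thesis by (simp add: pr)
qed

lemma theta_diff: "theta_hat n H \<mu> x - \<theta> = H *v (Am *v ((1 / real n) *\<^sub>R (\<Sum>m<n. x m)) - hh)"
proof -
  have s1: "(\<Sum>i\<in>UNIV. \<theta> $ i) = 1" using th by (simp add: prob_simplex_def)
  have "H *v hh = \<theta> - (1 / real CARD('d)) *\<^sub>R ones"
    using HHt[of \<theta>] s1 by (simp add: hvec_eq del: transpose_matrix_vector)
  then have e: "(1 / real CARD('d)) *\<^sub>R ones = \<theta> - H *v hh" by (simp add: algebra_simps)
  show ?thesis
    unfolding theta_hat_def Am_def[symmetric] e by (simp add: matrix_vector_mult_diff_distrib algebra_simps)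
qed

lemma norm2_vec: "(norm (v::real^'k))\<^sup>2 = (\<Sum>i\<in>UNIV. (v $ i)\<^sup>2)"
  by (simp only: power2_norm_eq_inner inner_vec_def) (simp add: power2_eq_square)

lemma pointwise:
  fixes n :: nat assumes n: "n \<ge> 1"
  shows "(norm (theta_hat n H \<mu> x - \<theta>))\<^sup>2
     = (\<Sum>m<n. \<Sum>m'<n. \<Sum>i\<in>UNIV. Yi i (x m) * Yi i (x m')) / (real n)\<^sup>2"
proof -
  let ?v = "Am *v ((1 / real n) *\<^sub>R (\<Sum>m<n. x m)) - hh"
  have comp: "?v $ i = (\<Sum>m<n. Yi i (x m)) / real n" for i
  proof -
    have "(Am *v ((1 / real n) *\<^sub>R (\<Sum>m<n. x m))) = (1 / real n) *\<^sub>R (\<Sum>m<n. Am *v x m)"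
      by (simp add: matrix_vector_mult_scaleR linear_sum[OF matrix_vector_mul_linear])
    then have "(Am *v ((1 / real n) *\<^sub>R (\<Sum>m<n. x m))) $ i = (\<Sum>m<n. (Am *v x m) $ i) / real n"
      by (simp add: sum_component)
    moreover have "(\<Sum>m<n. hh $ i) / real n = hh $ i" using n by simp
    ultimately have "?v $ i = (\<Sum>m<n. (Am *v x m) $ i) / real n - (\<Sum>m<n. hh $ i) / real n"
      by simp
    also have "\<dots> = (\<Sum>m<n. Yi i (x m)) / real n"
      by (simp add: Yi_def sum_subtractf diff_divide_distrib)
    finally show ?thesis .
  qed
  have "(norm (theta_hat n H \<mu> x - \<theta>))\<^sup>2 = (norm ?v)\<^sup>2"
    by (simp add: theta_diff norm_Hv)
  also have "\<dots> = (\<Sum>i\<in>UNIV. ((\<Sum>m<n. Yi i (x m)) / real n)\<^sup>2)"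
    by (simp only: norm2_vec comp)
  also have "\<dots> = (\<Sum>i\<in>UNIV. (\<Sum>m<n. \<Sum>m'<n. Yi i (x m) * Yi i (x m')) / (real n)\<^sup>2)"
    by (simp add: power_divide power2_eq_square sum_product)
  also have "\<dots> = (\<Sum>i\<in>UNIV. \<Sum>m<n. \<Sum>m'<n. Yi i (x m) * Yi i (x m')) / (real n)\<^sup>2"
    by (simp only: sum_divide_distrib)
  also have "(\<Sum>i\<in>UNIV. \<Sum>m<n. \<Sum>m'<n. Yi i (x m) * Yi i (x m')) = (\<Sum>m<n. \<Sum>i\<in>UNIV. \<Sum>m'<n. Yi i (x m) * Yi i (x m'))"
    by (rule sum.swap)
  also have "\<dots> = (\<Sum>m<n. \<Sum>m'<n. \<Sum>i\<in>UNIV. Yi i (x m) * Yi i (x m'))"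
    by (rule sum.cong[OF refl], rule sum.swap)
  finally show ?thesis .
qed

lemma risk:
  fixes n :: nat
  assumes I: "invertible (Sig \<mu>)" and n: "n \<ge> 1"
  shows "R_iid n H \<theta> \<mu> = ennreal ((\<Sum>i\<in>UNIV. (\<integral>z. (Yi i z)\<^sup>2 \<partial>\<nu>)) / real n)"
proof -
  let ?PM = "PiM {..<n} (\<lambda>_. \<nu>)"
  define F where "F x = (\<Sum>m<n. \<Sum>m'<n. \<Sum>i\<in>UNIV. Yi i (x m) * Yi i (x m')) / (real n)\<^sup>2" for x :: "nat \<Rightarrow> real^'k"
  have FF: "(norm (theta_hat n H \<mu> x - \<theta>))\<^sup>2 = F x" for x
    unfolding F_def by (rule pointwise[OF n])
  have Fint: "integrable ?PM F"
    unfolding F_def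
    by (intro integrable_divide Bochner_Integration.integrable_sum int_Y) auto
  have "R_iid n H \<theta> \<mu> = (\<integral>\<^sup>+x. ennreal (F x) \<partial>?PM)"
    unfolding R_iid_def using I by (simp add: FF)
  also have "\<dots> = ennreal (\<integral>x. F x \<partial>?PM)"
    by (rule nn_integral_eq_integral[OF Fint]) (simp add: FF[symmetric])
  also have "(\<integral>x. F x \<partial>?PM) = (\<Sum>m<n. \<Sum>m'<n. \<Sum>i\<in>UNIV. (\<integral>x. Yi i (x m) * Yi i (x m') \<partial>?PM)) / (real n)\<^sup>2"
  proof -
    have e3: "(\<integral>x. (\<Sum>i\<in>UNIV. Yi i (x m) * Yi i (x m')) \<partial>?PM) = (\<Sum>i\<in>UNIV. (\<integral>x. Yi i (x m) * Yi i (x m') \<partial>?PM))"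
      if "m < n" "m' < n" for m m'
      by (rule Bochner_Integration.integral_sum) (rule int_Y[OF that])
    have e2: "(\<integral>x. (\<Sum>m'<n. \<Sum>i\<in>UNIV. Yi i (x m) * Yi i (x m')) \<partial>?PM) = (\<Sum>m'<n. \<integral>x. (\<Sum>i\<in>UNIV. Yi i (x m) * Yi i (x m')) \<partial>?PM)"
      if "m < n" for m
      by (rule Bochner_Integration.integral_sum) (use that in \<open>auto intro!: Bochner_Integration.integrable_sum int_Y\<close>)
    have e1: "(\<integral>x. (\<Sum>m<n. \<Sum>m'<n. \<Sum>i\<in>UNIV. Yi i (x m) * Yi i (x m')) \<partial>?PM) = (\<Sum>m<n. \<integral>x. (\<Sum>m'<n. \<Sum>i\<in>UNIV. Yi i (x m) * Yi i (x m')) \<partial>?PM)"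
      by (rule Bochner_Integration.integral_sum) (auto intro!: Bochner_Integration.integrable_sum int_Y)
    show ?thesis unfolding F_def Bochner_Integration.integral_divide_zero e1
      by (intro arg_cong[where f="\<lambda>x. x / _"] sum.cong refl) (simp add: e2 e3)
  qed
  also have "\<dots> = (\<Sum>m<n. \<Sum>m'<n. \<Sum>i\<in>UNIV. (if m = m' then (\<integral>z. (Yi i z)\<^sup>2 \<partial>\<nu>) else 0)) / (real n)\<^sup>2"
    by (simp add: prod_Y[OF I])
  also have "\<dots> = (\<Sum>m<n. \<Sum>i\<in>UNIV. (\<integral>z. (Yi i z)\<^sup>2 \<partial>\<nu>)) / (real n)\<^sup>2"
  proof -
    have "(\<Sum>m'<n. \<Sum>i\<in>UNIV. (if m = m' then (\<integral>z. (Yi i z)\<^sup>2 \<partial>\<nu>) else 0))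
        = (\<Sum>i\<in>UNIV. (\<integral>z. (Yi i z)\<^sup>2 \<partial>\<nu>))" if "m < n" for m
      using that by (subst sum.swap) (simp add: if_distrib cong: if_cong)
    then show ?thesis by simp
  qed
  also have "\<dots> = (\<Sum>i\<in>UNIV. (\<integral>z. (Yi i z)\<^sup>2 \<partial>\<nu>)) / real n"
    using n by (simp add: power2_eq_square)
  finally show ?thesis .
qed

lemma risk2:
  fixes n :: nat
  assumes I: "invertible (Sig \<mu>)" and n: "n \<ge> 1"
  shows "R_iid n H \<theta> \<mu> = ennreal (((\<integral>z. Dn z * (norm (Am *v z))\<^sup>2 \<partial>\<mu>) - (norm hh)\<^sup>2) / real n)"
proof -
  have "(\<Sum>i\<in>UNIV. (\<integral>z. (Yi i z)\<^sup>2 \<partial>\<nu>)) = (\<Sum>i\<in>UNIV. (\<integral>z. ((Am *v z) $ i)\<^sup>2 \<partial>\<nu>) - (hh $ i)\<^sup>2)"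
    by (simp add: nu_Y2[OF I])
  also have "\<dots> = (\<integral>z. (\<Sum>i\<in>UNIV. ((Am *v z) $ i)\<^sup>2) \<partial>\<nu>) - (\<Sum>i\<in>UNIV. (hh $ i)\<^sup>2)"
    by (subst Bochner_Integration.integral_sum) (auto intro!: int_nu continuous_intros simp: sum_subtractf)
  also have "\<dots> = (\<integral>z. (norm (Am *v z))\<^sup>2 \<partial>\<nu>) - (norm hh)\<^sup>2"
    by (simp only: norm2_vec)
  also have "(\<integral>z. (norm (Am *v z))\<^sup>2 \<partial>\<nu>) = (\<integral>z. Dn z * (norm (Am *v z))\<^sup>2 \<partial>\<mu>)"
    by (rule integral_nu) (intro continuous_intros)
  finally show ?thesis by (simp add: risk[OF I n])
qed

lemma inner_vec_sum: "x \<bullet> (y::real^'k) = (\<Sum>i\<in>UNIV. x $ i * y $ i)"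
  by (simp add: inner_vec_def)

lemma cs_bound:
  assumes I: "invertible (Sig \<mu>)"
  shows "real CARD('k) ^ 2 \<le> trace (Sig \<mu>) * (\<integral>z. (norm (Am *v z))\<^sup>2 \<partial>\<mu>)"
proof -
  define P where "P = (\<integral>z. (norm z)\<^sup>2 \<partial>\<mu>)"
  define Q where "Q = (\<integral>z. (norm (Am *v z))\<^sup>2 \<partial>\<mu>)"
  define R where "R = (\<integral>z. z \<bullet> (Am *v z) \<partial>\<mu>)"
  have P: "P = trace (Sig \<mu>)"
  proof -
    have "P = (\<integral>z. (\<Sum>i\<in>UNIV. z $ i * z $ i) \<partial>\<mu>)"
      unfolding P_def norm2_vec by (simp add: power2_eq_square)
    also have "\<dots> = (\<Sum>i\<in>UNIV. (\<integral>z. z $ i * z $ i \<partial>\<mu>))"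
      by (rule Bochner_Integration.integral_sum) (auto intro!: int_mu continuous_intros)
    also have "\<dots> = trace (Sig \<mu>)" by (simp add: trace_def Sig_def)
    finally show ?thesis .
  qed
  have R: "R = real CARD('k)"
  proof -
    have "R = (\<integral>z. (\<Sum>i\<in>UNIV. \<Sum>j\<in>UNIV. Am $ i $ j * (z $ j * z $ i)) \<partial>\<mu>)"
      unfolding R_def inner_vec_sum Am_comp
      by (rule Bochner_Integration.integral_cong[OF refl]) (simp add: sum_distrib_left sum_distrib_right mult_ac)
    also have "\<dots> = (\<Sum>i\<in>UNIV. \<Sum>j\<in>UNIV. Am $ i $ j * (\<integral>z. z $ j * z $ i \<partial>\<mu>))"
      by (subst Bochner_Integration.integral_sum, (auto intro!: Bochner_Integration.integrable_sum int_mu continuous_intros)[1])+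
         (simp add: Bochner_Integration.integral_sum int_mu continuous_intros)
    also have "\<dots> = trace (Am ** Sig \<mu>)"
      by (simp add: trace_def matrix_matrix_mult_def Sig_def)
    also have "\<dots> = real CARD('k)" by (simp add: Am_Sig[OF I] trace_I)
    finally show ?thesis .
  qed
  have quad: "0 \<le> Q - 2 * t * R + t\<^sup>2 * P" for t
  proof -
    have "0 \<le> (\<integral>z. (norm (Am *v z - t *\<^sub>R z))\<^sup>2 \<partial>\<mu>)" by simp
    also have "\<dots> = (\<integral>z. (norm (Am *v z))\<^sup>2 - 2 * t * (z \<bullet> (Am *v z)) + t\<^sup>2 * (norm z)\<^sup>2 \<partial>\<mu>)"
      by (rule Bochner_Integration.integral_cong[OF refl], unfold power2_norm_eq_inner)
         (simp add: inner_diff_left inner_diff_right inner_commute power2_eq_square algebra_simps)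
    also have "\<dots> = Q - 2 * t * R + t\<^sup>2 * P"
      unfolding P_def Q_def R_def
      by (subst Bochner_Integration.integral_add Bochner_Integration.integral_diff;
          (auto intro!: int_mu continuous_intros)?)+
    finally show ?thesis .
  qed
  have k1: "real CARD('k) \<ge> 1" using zero_less_card_finite[where 'a='k] by (simp add: Suc_le_eq)
  have P0: "P \<ge> 0" unfolding P_def by simp
  show ?thesis
  proof (cases "P = 0")
    case True
    have "0 \<le> Q - 2 * ((Q + 1) / (2 * R)) * R" using quad[of "(Q + 1) / (2 * R)"] True by simp
    then have False using R k1 by (simp add: field_simps)
    then show ?thesis ..
  next
    case False
    then have Pp: "P > 0" using P0 by simp
    have "0 \<le> Q - 2 * (R / P) * R + (R / P)\<^sup>2 * P" by (rule quad)
    then have "0 \<le> Q - R\<^sup>2 / P" using Pp by (simp add: power2_eq_square field_simps)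
    then have "R\<^sup>2 \<le> P * Q" using Pp by (simp add: field_simps)
    then show ?thesis using P R Q_def by simp
  qed
qed

end

lemma norm2v: "(norm (v::real^'k))\<^sup>2 = (\<Sum>i\<in>UNIV. (v $ i)\<^sup>2)"
  by (simp only: power2_norm_eq_inner inner_vec_def) (simp add: power2_eq_square)

locale asetup = hsetup H for H :: "real^'k^'d" +
  fixes \<rho> :: "(real^'k) measure"
  assumes P: "prob_space \<rho>" and S: "sets \<rho> = sets borel" and X: "AE x in \<rho>. x \<in> Xd H"
    and M0: "\<And>j. (\<integral>x. x $ j \<partial>\<rho>) = 0"
begin

interpretation R: prob_space \<rho> by (rule P)

lemma int_rho: "continuous_on UNIV g \<Longrightarrow> integrable \<rho> (g :: real^'k \<Rightarrow> real)"
  by (rule int_cont[OF _ S]) (auto simp: R.finite_measure_axioms intro: X[THEN eventually_mono] Xd_bound)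

abbreviation "\<rho>b \<equiv> sym_law H \<rho>"

lemma symint: "(\<integral>x. g x \<partial>\<rho>b) = (\<Sum>p\<in>Perms. \<integral>x. g (Pperm H p *v x) \<partial>\<rho>) / fact CARD('d)"
  if "continuous_on UNIV g" for g :: "real^'k \<Rightarrow> real"
  by (rule sym_int_cont[OF P S X that])

lemma lin_int: "(\<integral>x. (\<Sum>b\<in>UNIV. c b * f b x) \<partial>\<rho>) = (\<Sum>b\<in>UNIV. c b * (\<integral>x. f b x \<partial>\<rho>))"
  if "\<And>b. continuous_on UNIV (f b)" for c :: "'b::finite \<Rightarrow> real" and f :: "'b \<Rightarrow> real^'k \<Rightarrow> real"
  by (subst Bochner_Integration.integral_sum) (auto intro!: int_rho continuous_intros that)

lemma symb_mean: "(\<integral>x. x $ j \<partial>\<rho>b) = 0"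
proof -
  have "(\<integral>x. (Pperm H p *v x) $ j \<partial>\<rho>) = 0" for p
  proof -
    have "(\<integral>x. (Pperm H p *v x) $ j \<partial>\<rho>) = (\<integral>x. (\<Sum>b\<in>UNIV. Pperm H p $ j $ b * x $ b) \<partial>\<rho>)"
      by (simp add: matrix_vector_mult_def)
    also have "\<dots> = 0" by (subst lin_int) (auto intro!: continuous_intros simp: M0)
    finally show ?thesis .
  qed
  then show ?thesis by (subst symint) (auto intro!: continuous_intros)
qed

lemma norm2_int: "(\<integral>x. (norm x)\<^sup>2 \<partial>M) = trace (Sig M)"
  if "\<And>i. integrable M (\<lambda>x::real^'k. x $ i * x $ i)" for M
proof -
  have "(\<integral>x. (norm x)\<^sup>2 \<partial>M) = (\<integral>z. (\<Sum>i\<in>UNIV. z $ i * z $ i) \<partial>M)"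
    unfolding norm2v by (simp add: power2_eq_square)
  also have "\<dots> = (\<Sum>i\<in>UNIV. (\<integral>z. z $ i * z $ i \<partial>M))"
    by (rule Bochner_Integration.integral_sum) (rule that)
  also have "\<dots> = trace (Sig M)" by (simp add: trace_def Sig_def)
  finally show ?thesis .
qed

lemma symb_trace: "trace (Sig \<rho>b) = trace (Sig \<rho>)"
proof -
  interpret Q: prob_space \<rho>b by (rule sym_prob[OF P S])
  have XQ: "AE x in \<rho>b. x \<in> Xd H" by (rule sym_AE_Xd[OF P S X])
  have iQ: "integrable \<rho>b g" if "continuous_on UNIV g" for g :: "real^'k \<Rightarrow> real"
    by (rule int_cont[OF _ sym_sets _ that]) (auto simp: Q.finite_measure_axioms intro: XQ[THEN eventually_mono] Xd_bound)
  have "trace (Sig \<rho>b) = (\<integral>x. (norm x)\<^sup>2 \<partial>\<rho>b)"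
    by (rule norm2_int[symmetric]) (auto intro!: iQ continuous_intros)
  also have "\<dots> = (\<Sum>p\<in>Perms. \<integral>x. (norm (Pperm H p *v x))\<^sup>2 \<partial>\<rho>) / fact CARD('d)"
    by (rule symint) (intro continuous_intros)
  also have "\<dots> = (\<Sum>p\<in>(Perms::('d \<Rightarrow> 'd) set). \<integral>x. (norm x)\<^sup>2 \<partial>\<rho>) / fact CARD('d)"
    by (simp add: norm_Pperm)
  also have "\<dots> = (\<integral>x. (norm x)\<^sup>2 \<partial>\<rho>)"
    by (simp add: Perms_card)
  also have "\<dots> = trace (Sig \<rho>)"
    by (rule norm2_int) (auto intro!: int_rho continuous_intros)
  finally show ?thesis .
qed

lemma symb_third: "(\<integral>x. x $ l * (norm x)\<^sup>2 \<partial>\<rho>b) = 0"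
proof -
  define w where "w i = (\<integral>x. (H *v x) $ i * (norm x)\<^sup>2 \<partial>\<rho>)" for i
  have step1: "(\<integral>x. (Pperm H p *v x) $ l * (norm (Pperm H p *v x))\<^sup>2 \<partial>\<rho>) = (\<Sum>a\<in>UNIV. H $ a $ l * w (inv p a))"
    if p: "p \<in> Perms" for p
  proof -
    have "(\<integral>x. (Pperm H p *v x) $ l * (norm (Pperm H p *v x))\<^sup>2 \<partial>\<rho>)
        = (\<integral>x. (\<Sum>a\<in>UNIV. H $ a $ l * ((H *v x) $ (inv p a) * (norm x)\<^sup>2)) \<partial>\<rho>)"
      using p by (simp add: Pperm_comp norm_Pperm sum_distrib_left mult_ac)
    also have "\<dots> = (\<Sum>a\<in>UNIV. H $ a $ l * w (inv p a))"
      unfolding w_def by (subst lin_int) (auto intro!: continuous_intros)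
    finally show ?thesis .
  qed
  obtain a0 :: 'd where True by simp
  have G1: "(\<Sum>p\<in>Perms. w (inv p a)) = (\<Sum>p\<in>Perms. w (p a0))" for a
  proof -
    have "(\<Sum>p\<in>Perms. w (inv p a)) = (\<Sum>p\<in>Perms. w (p a))"
      using sum_permutations_inverse[of "\<lambda>p. w (p a)" UNIV] by simp
    also have "\<dots> = (\<Sum>p\<in>Perms. w (p a0))"
      using G_diag[of "\<lambda>i j. w i" a a0] by simp
    finally show ?thesis .
  qed
  have "(\<integral>x. x $ l * (norm x)\<^sup>2 \<partial>\<rho>b) = (\<Sum>p\<in>Perms. \<Sum>a\<in>UNIV. H $ a $ l * w (inv p a)) / fact CARD('d)"
    by (subst symint) (auto intro!: continuous_intros simp: step1)
  also have "(\<Sum>p\<in>Perms. \<Sum>a\<in>UNIV. H $ a $ l * w (inv p a)) = (\<Sum>a\<in>UNIV. H $ a $ l * (\<Sum>p\<in>Perms. w (inv p a)))"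
    by (subst sum.swap) (simp add: sum_distrib_left)
  also have "\<dots> = (\<Sum>a\<in>UNIV. H $ a $ l) * (\<Sum>p\<in>Perms. w (p a0))"
    by (simp add: G1 sum_distrib_right)
  also have "\<dots> = 0" by (simp add: col_sum0)
  finally show ?thesis by simp
qed

lemma symb_Sig:
  assumes d2: "CARD('d) \<ge> 2"
  shows "\<exists>c. Sig \<rho>b = c *\<^sub>R mat 1"
proof -
  define W where "W i j = (\<integral>x. (H *v x) $ i * (H *v x) $ j \<partial>\<rho>)" for i j
  define G where "G a b = (\<Sum>p\<in>Perms. W (p a) (p b))" for a b
  obtain a0 :: 'd where True by simp
  have "UNIV - {a0} \<noteq> {}"
  proof
    assume "UNIV - {a0} = {}"
    then have "(UNIV::'d set) = {a0}" by auto
    then show False using d2 by (metis card_1_singleton_iff numeral_le_one_iff semiring_norm(69) One_nat_def)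
  qed
  then obtain b0 where b0: "b0 \<noteq> a0" by auto
  have Gv: "G a b = (if a = b then G a0 a0 else G a0 b0)" for a b
    unfolding G_def using G_diag[of W a a0] G_off[of a b a0 b0 W] b0 by auto
  have step1: "(\<integral>x. (Pperm H p *v x) $ l * (Pperm H p *v x) $ m \<partial>\<rho>)
       = (\<Sum>a\<in>UNIV. \<Sum>b\<in>UNIV. (H $ a $ l * H $ b $ m) * W (inv p a) (inv p b))"
    if p: "p \<in> Perms" for p l m
  proof -
    have "(\<integral>x. (Pperm H p *v x) $ l * (Pperm H p *v x) $ m \<partial>\<rho>)
        = (\<integral>x. (\<Sum>a\<in>UNIV. \<Sum>b\<in>UNIV. (H $ a $ l * H $ b $ m) * ((H *v x) $ (inv p a) * (H *v x) $ (inv p b))) \<partial>\<rho>)"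
      using p by (simp add: Pperm_comp sum_product mult_ac)
    also have "\<dots> = (\<Sum>a\<in>UNIV. \<integral>x. (\<Sum>b\<in>UNIV. (H $ a $ l * H $ b $ m) * ((H *v x) $ (inv p a) * (H *v x) $ (inv p b))) \<partial>\<rho>)"
      by (rule Bochner_Integration.integral_sum) (auto intro!: int_rho continuous_intros)
    also have "\<dots> = (\<Sum>a\<in>UNIV. \<Sum>b\<in>UNIV. (H $ a $ l * H $ b $ m) * W (inv p a) (inv p b))"
      unfolding W_def by (subst lin_int) (auto intro!: continuous_intros)
    finally show ?thesis .
  qed
  define c where "c = (G a0 a0 - G a0 b0) / fact CARD('d)"
  have "Sig \<rho>b $ l $ m = c * mat 1 $ l $ m" for l m
  proof -
    have "Sig \<rho>b $ l $ m = (\<integral>x. x $ l * x $ m \<partial>\<rho>b)" by (simp add: Sig_def)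
    also have "\<dots> = (\<Sum>p\<in>Perms. \<Sum>a\<in>UNIV. \<Sum>b\<in>UNIV. (H $ a $ l * H $ b $ m) * W (inv p a) (inv p b)) / fact CARD('d)"
      by (subst symint) (auto intro!: continuous_intros simp: step1)
    also have "(\<Sum>p\<in>Perms. \<Sum>a\<in>UNIV. \<Sum>b\<in>UNIV. (H $ a $ l * H $ b $ m) * W (inv p a) (inv p b))
        = (\<Sum>a\<in>UNIV. \<Sum>b\<in>UNIV. (H $ a $ l * H $ b $ m) * (\<Sum>p\<in>Perms. W (inv p a) (inv p b)))"
      by (subst sum.swap, rule sum.cong[OF refl], subst sum.swap) (simp add: sum_distrib_left)
    also have "\<dots> = (\<Sum>a\<in>UNIV. \<Sum>b\<in>UNIV. (H $ a $ l * H $ b $ m) * G a b)"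
    proof -
      have "(\<Sum>p\<in>Perms. W (inv p a) (inv p b)) = G a b" for a b
        unfolding G_def using sum_permutations_inverse[of "\<lambda>p. W (p a) (p b)" UNIV] by simp
      then show ?thesis by simp
    qed
    also have "\<dots> = (\<Sum>a\<in>UNIV. \<Sum>b\<in>UNIV. (H $ a $ l * H $ b $ m) * G a0 b0)
        + (\<Sum>a\<in>UNIV. \<Sum>b\<in>UNIV. (H $ a $ l * H $ b $ m) * (if a = b then G a0 a0 - G a0 b0 else 0))"
    proof -
      have pw: "(H $ a $ l * H $ b $ m) * G a b = (H $ a $ l * H $ b $ m) * G a0 b0
          + (H $ a $ l * H $ b $ m) * (if a = b then G a0 a0 - G a0 b0 else 0)" for a b
        by (subst Gv) (simp add: algebra_simps)
      show ?thesis by (simp only: pw sum.distrib)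
    qed
    also have "(\<Sum>a\<in>UNIV. \<Sum>b\<in>UNIV. (H $ a $ l * H $ b $ m) * G a0 b0) = 0"
    proof -
      have "(\<Sum>a\<in>UNIV. \<Sum>b\<in>UNIV. (H $ a $ l * H $ b $ m) * G a0 b0)
          = (\<Sum>a\<in>UNIV. H $ a $ l) * ((\<Sum>b\<in>UNIV. H $ b $ m) * G a0 b0)"
        by (simp only: sum_distrib_left sum_distrib_right mult.assoc) (rule sum.swap)
      then show ?thesis by (simp add: col_sum0)
    qed
    also have "(\<Sum>a\<in>UNIV. \<Sum>b\<in>UNIV. (H $ a $ l * H $ b $ m) * (if a = b then G a0 a0 - G a0 b0 else 0))
        = (G a0 a0 - G a0 b0) * (\<Sum>a\<in>UNIV. H $ a $ l * H $ a $ m)"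
      by (simp add: if_distrib sum_distrib_left mult_ac cong: if_cong)
    also have "(\<Sum>a\<in>UNIV. H $ a $ l * H $ a $ m) = (transpose H ** H) $ l $ m"
      by (simp add: matrix_matrix_mult_def transpose_def)
    finally show ?thesis by (simp add: H_orth c_def)
  qed
  then have "Sig \<rho>b = c *\<^sub>R mat 1" by (simp add: vec_eq_iff)
  then show ?thesis by blast
qed

end

lemma invertible_mat1: "invertible (mat 1 :: real^'n^'n)"
  unfolding invertible_def by (rule exI[of _ "mat 1"]) simp

lemma trace_smat: "trace (c *\<^sub>R (mat 1 :: real^'n^'n)) = c * real CARD('n)"
  by (simp add: trace_def mat_def)

lemma not_inv0: "\<not> invertible (0 *\<^sub>R (mat 1 :: real^'n^'n))"
proof
  assume "invertible (0 *\<^sub>R (mat 1 :: real^'n^'n))"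
  then obtain B :: "real^'n^'n" where "(0 *\<^sub>R (mat 1 :: real^'n^'n)) ** B = mat 1"
    unfolding invertible_def by blast
  then have "(mat 1 :: real^'n^'n) = 0" by (simp add: scalar_matrix_assoc[symmetric])
  then have "(mat 1 :: real^'n^'n) $ undefined $ undefined = 0" by simp
  then show False by (simp add: mat_def)
qed

context asetup begin

abbreviation "TT \<equiv> trace (Sig \<rho>)"

lemma TT_nonneg: "0 \<le> TT"
proof -
  have "TT = (\<integral>x. (norm x)\<^sup>2 \<partial>\<rho>)"
    by (rule norm2_int[symmetric]) (auto intro!: int_rho continuous_intros)
  then show ?thesis by simp
qed

lemma symb_norm2: "(\<integral>x. (norm x)\<^sup>2 \<partial>\<rho>b) = TT"
proof -
  interpret Q: prob_space \<rho>b by (rule sym_prob[OF P S])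
  have XQ: "AE x in \<rho>b. x \<in> Xd H" by (rule sym_AE_Xd[OF P S X])
  have iQ: "integrable \<rho>b g" if "continuous_on UNIV g" for g :: "real^'k \<Rightarrow> real"
    by (rule int_cont[OF _ sym_sets _ that]) (auto simp: Q.finite_measure_axioms intro: XQ[THEN eventually_mono] Xd_bound)
  have "(\<integral>x. (norm x)\<^sup>2 \<partial>\<rho>b) = trace (Sig \<rho>b)"
    by (rule norm2_int) (auto intro!: iQ continuous_intros)
  then show ?thesis by (simp add: symb_trace)
qed

lemma symb_Sig_val:
  assumes d2: "CARD('d) \<ge> 2"
  shows "Sig \<rho>b = (TT / real CARD('k)) *\<^sub>R mat 1"
proof -
  obtain c where c: "Sig \<rho>b = c *\<^sub>R mat 1" using symb_Sig[OF d2] by blast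
  have "c * real CARD('k) = TT" using symb_trace c trace_smat[of c, where 'n='k] by simp
  then have "c = TT / real CARD('k)" by (simp add: field_simps)
  then show ?thesis using c by simp
qed

lemma rb_risk:
  fixes n :: nat
  assumes d2: "CARD('d) \<ge> 2" and n: "n \<ge> 1" and T: "TT \<noteq> 0" and th: "\<theta> \<in> prob_simplex"
  shows "R_iid n H \<theta> \<rho>b = ennreal ((real CARD('k) ^ 2 / TT - (norm (hvec H \<theta>))\<^sup>2) / real n)"
proof -
  interpret r: rsetup H \<rho>b \<theta>
  proof (rule rsetup.intro)
    show "hsetup H" by (rule hsetup_axioms)
    show "rsetup_axioms H \<rho>b \<theta>"
    proof (rule rsetup_axioms.intro)
      show "prob_space \<rho>b" by (rule sym_prob[OF P S])
      show "sets \<rho>b = sets borel" by (rule sym_sets)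
      show "AE x in \<rho>b. x \<in> Xd H" by (rule sym_AE_Xd[OF P S X])
      show "(\<integral>x. x $ j \<partial>\<rho>b) = 0" for j by (rule symb_mean)
      show "\<theta> \<in> prob_simplex" by (rule th)
    qed
  qed
  define c where "c = TT / real CARD('k)"
  have c0: "c \<noteq> 0" using T by (simp add: c_def)
  have Sg: "Sig \<rho>b = c *\<^sub>R mat 1" unfolding c_def by (rule symb_Sig_val[OF d2])
  have I: "invertible (Sig \<rho>b)" unfolding Sg by (rule scalar_invertible[OF c0 invertible_mat1])
  have "r.Am ** (c *\<^sub>R mat 1) = mat 1" using r.Am_Sig[OF I] Sg by simp
  then have "c *\<^sub>R r.Am = mat 1" by (simp add: matrix_scalar_ac)
  then have Am: "r.Am = (1 / c) *\<^sub>R mat 1" using c0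
    by (metis (no_types, lifting) divide_inverse_commute divide_self_if mult_1 scaleR_one scaleR_scaleR)
  have Amz: "(norm (r.Am *v z))\<^sup>2 = (norm z)\<^sup>2 / c\<^sup>2" for z
    unfolding Am by (simp add: scaleR_matrix_vector_assoc[symmetric] power_divide)
  have "(\<integral>z. r.Dn z * (norm (r.Am *v z))\<^sup>2 \<partial>\<rho>b) = (\<integral>z. r.Dn z * (norm z)\<^sup>2 \<partial>\<rho>b) / c\<^sup>2"
    by (simp add: Amz)
  also have "(\<integral>z. r.Dn z * (norm z)\<^sup>2 \<partial>\<rho>b) = TT"
    by (subst r.int_Dn) (auto intro!: continuous_intros simp: symb_norm2 symb_third)
  finally have e: "(\<integral>z. r.Dn z * (norm (r.Am *v z))\<^sup>2 \<partial>\<rho>b) = real CARD('k) ^ 2 / TT"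
    using T by (simp add: c_def power2_eq_square field_simps)
  show ?thesis using r.risk2[OF I n] e by simp
qed

definition th0 :: "real^'d" where "th0 = (1 / real CARD('d)) *\<^sub>R ones"

lemma th0_simplex: "th0 \<in> prob_simplex"
  by (simp add: th0_def prob_simplex_def ones_def)

lemma th0_h: "hvec H th0 = 0"
  unfolding hvec_eq th0_def using Ht_ones
  by (simp add: matrix_vector_mult_scaleR del: transpose_matrix_vector)

lemma rsetup_rho: "\<theta> \<in> prob_simplex \<Longrightarrow> rsetup H \<rho> \<theta>"
  by (intro rsetup.intro hsetup_axioms rsetup_axioms.intro P S X M0)

lemma rb_sing: assumes d2: "CARD('d) \<ge> 2" and T: "TT = 0" shows "\<not> invertible (Sig \<rho>b)"
  using symb_Sig_val[OF d2] T not_inv0 by simp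

lemma rho_sing: assumes T: "TT = 0" shows "\<not> invertible (Sig \<rho>)"
proof
  assume I: "invertible (Sig \<rho>)"
  interpret r: rsetup H \<rho> th0 by (rule rsetup_rho[OF th0_simplex])
  have "real CARD('k) ^ 2 \<le> 0" using r.cs_bound[OF I] T by simp
  then show False by simp
qed

lemma rho_lower:
  fixes n :: nat
  assumes n: "n \<ge> 1" and T: "TT \<noteq> 0"
  shows "ennreal (real CARD('k) ^ 2 / (real n * TT)) \<le> R_iid n H th0 \<rho>"
proof (cases "invertible (Sig \<rho>)")
  case False
  then show ?thesis by (simp add: R_iid_def)
next
  case I: True
  interpret r: rsetup H \<rho> th0 by (rule rsetup_rho[OF th0_simplex])
  have Tp: "TT > 0" using T TT_nonneg by simp
  have D1: "r.Dn z = 1" for z by (simp add: r.Dn_def th0_h)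
  let ?Q = "(\<integral>z. (norm (r.Am *v z))\<^sup>2 \<partial>\<rho>)"
  have R: "R_iid n H th0 \<rho> = ennreal (?Q / real n)"
    using r.risk2[OF I n] by (simp add: D1 th0_h)
  have "real CARD('k) ^ 2 \<le> TT * ?Q" by (rule r.cs_bound[OF I])
  then have "real CARD('k) ^ 2 / TT \<le> ?Q" using Tp by (simp add: field_simps)
  then have "real CARD('k) ^ 2 / (real n * TT) \<le> ?Q / real n"
    using n Tp by (simp add: field_simps)
  then show ?thesis unfolding R by (rule ennreal_leI)
qed

end

theorem corollary6p2:
  fixes H :: "real^'k^'d" and \<rho> :: "(real^'k) measure" and n :: nat
  assumes d: "CARD('d) \<ge> 2" and dk: "CARD('d) = CARD('k) + 1"
    and n: "n \<ge> 1"
    and H_orth: "transpose H ** H = mat 1"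
    and H_span: "span (columns H) = {u. (\<Sum>i\<in>UNIV. u $ i) = 0}"
    and \<rho>: "anchored H \<rho>"
  shows "(SUP \<theta>\<in>prob_simplex. R_iid n H \<theta> (sym_law H \<rho>)) \<le> (SUP \<theta>\<in>prob_simplex. R_iid n H \<theta> \<rho>)
    \<and> (SUP \<theta>\<in>prob_simplex. R_iid n H \<theta> (sym_law H \<rho>)) =
        (if trace (Sig \<rho>) = 0 then \<infinity>
         else ennreal ((real CARD('d) - 1)\<^sup>2 / (real n * trace (Sig \<rho>))))"
proof -
  have hs: "hsetup H" by (rule hsetup.intro[OF H_orth H_span])
  interpret hsetup H by (rule hs)
  have P: "prob_space \<rho>" and S: "sets \<rho> = sets borel" and X: "AE x in \<rho>. x \<in> Xd H"
    and m0: "(\<integral>x. x \<partial>\<rho>) = 0"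
    using \<rho> by (auto simp: anchored_def)
  interpret R: prob_space \<rho> by (rule P)
  have intx: "integrable \<rho> (\<lambda>x. x)"
  proof (rule R.integrable_const_bound[where B="real CARD('d) ^ 2"])
    show "AE x in \<rho>. norm x \<le> real CARD('d) ^ 2"
      using X by eventually_elim (rule Xd_bound)
    show "(\<lambda>x. x) \<in> borel_measurable \<rho>"
    proof -
      have "(\<lambda>x. x) \<in> borel_measurable (borel :: (real^'k) measure)" by simp
      then show ?thesis using measurable_cong_sets[OF S refl] by blast
    qed
  qed
  have M0: "(\<integral>x. x $ j \<partial>\<rho>) = 0" for j
    using integral_bounded_linear[OF bounded_linear_vec_nth intx, of j] m0 by simp
  interpret a: asetup H \<rho>
    by (rule asetup.intro[OF hs asetup_axioms.intro[OF P S X M0]])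
  have k: "real CARD('d) - 1 = real CARD('k)" using dk by simp
  have ne: "(prob_simplex :: (real^'d) set) \<noteq> {}" using a.th0_simplex by auto
  show ?thesis
  proof (cases "trace (Sig \<rho>) = 0")
    case T: True
    have "(SUP \<theta>\<in>prob_simplex. R_iid n H \<theta> (sym_law H \<rho>)) = (SUP \<theta>\<in>(prob_simplex::(real^'d) set). \<infinity>)"
      using a.rb_sing[OF d T] by (simp add: R_iid_def)
    also have "\<dots> = \<infinity>" using ne by simp
    finally have 1: "(SUP \<theta>\<in>prob_simplex. R_iid n H \<theta> (sym_law H \<rho>)) = \<infinity>" .
    have "(SUP \<theta>\<in>prob_simplex. R_iid n H \<theta> \<rho>) = (SUP \<theta>\<in>(prob_simplex::(real^'d) set). \<infinity>)"
      using a.rho_sing[OF T] by (simp add: R_iid_def)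
    also have "\<dots> = \<infinity>" using ne by simp
    finally have 2: "(SUP \<theta>\<in>prob_simplex. R_iid n H \<theta> \<rho>) = \<infinity>" .
    show ?thesis unfolding 1 2 using T by simp
  next
    case T: False
    define v where "v = ennreal (real CARD('k) ^ 2 / (real n * trace (Sig \<rho>)))"
    have Tp: "trace (Sig \<rho>) > 0" using T a.TT_nonneg by simp
    have up: "R_iid n H \<theta> (sym_law H \<rho>) \<le> v" if th: "\<theta> \<in> prob_simplex" for \<theta>
    proof -
      have "(real CARD('k) ^ 2 / trace (Sig \<rho>) - (norm (hvec H \<theta>))\<^sup>2) / real n
          \<le> real CARD('k) ^ 2 / (real n * trace (Sig \<rho>))"
        using n Tp by (simp add: field_simps)
      then show ?thesis unfolding v_def a.rb_risk[OF d n T th] by (rule ennreal_leI)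
    qed
    have at0: "R_iid n H a.th0 (sym_law H \<rho>) = v"
      unfolding v_def a.rb_risk[OF d n T a.th0_simplex] a.th0_h by (simp add: field_simps)
    have 1: "(SUP \<theta>\<in>prob_simplex. R_iid n H \<theta> (sym_law H \<rho>)) = v"
    proof (rule antisym)
      show "(SUP \<theta>\<in>prob_simplex. R_iid n H \<theta> (sym_law H \<rho>)) \<le> v" by (rule SUP_least) (rule up)
      show "v \<le> (SUP \<theta>\<in>prob_simplex. R_iid n H \<theta> (sym_law H \<rho>))"
        using SUP_upper[OF a.th0_simplex, of "\<lambda>\<theta>. R_iid n H \<theta> (sym_law H \<rho>)"] at0 by simp
    qed
    have 2: "v \<le> (SUP \<theta>\<in>prob_simplex. R_iid n H \<theta> \<rho>)"
      unfolding v_def by (rule order.trans[OF a.rho_lower[OF n T] SUP_upper[OF a.th0_simplex, of "\<lambda>\<theta>. R_iid n H \<theta> \<rho>"]])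
    show ?thesis using 1 2 T k v_def by simp
  qed
qed

end
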